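(* For real $z<1$, $z\ne0$, \[ 2\frac{E(z)}{K(z)}=2-z-\cfrac{z^2}{4(2-z)-\cfrac{9z^2}{8(2-z)-\cfrac{25z^2}{12(2-z)-\cfrac{49z^2}{16(2-z)-\cdots}}}}, \] i.e. the continued fraction with $a(0)=2-z$, $a(n)=4n(2-z)$ for $n\ge1$, and $b(n)=-(2n+1)^2z^2$ for $n\ge0$. Moreover, with $p(n)/q(n)$ its $n$-th convergent, as $n\to\infty$ \[ 2\frac{E(z)}{K(z)}-\frac{p(n)}{q(n)}\sim-\frac{2\pi/K(z)^2}{\big((1+\sqrt{1-z})^2/z\big)^{2n+2}}. \]
   Context: $K(z)=\frac\pi2\,{}_2F_1(\tfrac12,\tfrac12;1;z)$ and $E(z)=\frac\pi2\,{}_2F_1(-\tfrac12,\tfrac12;1;z)$ (note the argument is $z$, not $k$ with $z=k^2$). For sequences $a(n),b(n)$, the continued fraction is $a(0)+\cfrac{b(0)}{a(1)+\cfrac{b(1)}{a(2)+\cdots}}$ and its $n$-th convergent $p(n)/q(n)$ is the truncation ending with $b(n-1)/a(n)$. *)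

theory Defs
  imports "HOL-Analysis.Analysis" "HOL-Library.Landau_Symbols"
begin

text \<open>Complete elliptic integrals in the parameter z (not the modulus k, z = k^2).
  For real z < 1 they are given by the standard integral representations, which equal
  (pi/2) 2F1(1/2,1/2;1;z) and (pi/2) 2F1(-1/2,1/2;1;z) for abs z < 1 and provide the
  analytic continuation to all z < 1.\<close>
definition ellK :: "real \<Rightarrow> real" where
  "ellK z = integral {0..pi/2} (\<lambda>t. 1 / sqrt (1 - z * (sin t)^2))"

definition ellE :: "real \<Rightarrow> real" where
  "ellE z = integral {0..pi/2} (\<lambda>t. sqrt (1 - z * (sin t)^2))"

text \<open>Numerators and denominators of the convergents of
  a(0) + b(0)/(a(1) + b(1)/(a(2) + ...)), via the standard recurrences with
  p(-1) = 1, q(-1) = 0, p(0) = a(0), q(0) = 1.\<close>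
fun cf_p :: "(nat \<Rightarrow> real) \<Rightarrow> (nat \<Rightarrow> real) \<Rightarrow> nat \<Rightarrow> real" where
  "cf_p a b 0 = a 0"
| "cf_p a b (Suc 0) = a 1 * a 0 + b 0"
| "cf_p a b (Suc (Suc n)) = a (Suc (Suc n)) * cf_p a b (Suc n) + b (Suc n) * cf_p a b n"

fun cf_q :: "(nat \<Rightarrow> real) \<Rightarrow> (nat \<Rightarrow> real) \<Rightarrow> nat \<Rightarrow> real" where
  "cf_q a b 0 = 1"
| "cf_q a b (Suc 0) = a 1"
| "cf_q a b (Suc (Suc n)) = a (Suc (Suc n)) * cf_q a b (Suc n) + b (Suc n) * cf_q a b n"

end

theory Submission
  imports Defs
begin

definition QQ :: "(nat \<Rightarrow> real) \<Rightarrow> (nat \<Rightarrow> real) \<Rightarrow> nat \<Rightarrow> real" where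
  "QQ a b k = (if k = 0 then 0 else cf_q a b (k - 1))"
definition PP :: "(nat \<Rightarrow> real) \<Rightarrow> (nat \<Rightarrow> real) \<Rightarrow> nat \<Rightarrow> real" where
  "PP a b k = (if k = 0 then 1 else cf_p a b (k - 1))"

lemma QQ_rec: "k \<ge> 1 \<Longrightarrow> QQ a b (k+1) = a k * QQ a b k + b (k-1) * QQ a b (k-1)"
  by (cases k rule: nat.exhaust[of _ ]; cases "k - 1") (auto simp: QQ_def)

lemma PP_rec: "k \<ge> 1 \<Longrightarrow> PP a b (k+1) = a k * PP a b k + b (k-1) * PP a b (k-1)"
  by (cases k rule: nat.exhaust[of _ ]; cases "k - 1") (auto simp: PP_def)

definition dd :: "nat \<Rightarrow> real" where "dd k = (\<Prod>j<k. 2 * real j + 1)"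

lemma dd_Suc: "dd (Suc k) = dd k * (2 * real k + 1)" by (simp add: dd_def)
lemma dd_pos: "dd k > 0" by (simp add: dd_def prod_pos)

locale cfsetup =
  fixes z K E :: real and Gs :: "nat \<Rightarrow> real"
  assumes K_pos: "K > 0"
    and G0: "Gs 0 = K" and G1: "Gs 1 = (2 - z) * K - 2 * E"
    and Grec: "\<And>k. k \<ge> 1 \<Longrightarrow> (2 * real k + 1) * Gs (k+1) = 4 * real k * (2 - z) * Gs k - (2 * real k - 1) * z^2 * Gs (k - 1)"
    and Gpos: "\<And>k. Gs k > 0"
begin

lemma G1': "Gs (Suc 0) = (2 - z) * K - 2 * E" using G1 by simp

definition a :: "nat \<Rightarrow> real" where "a = (\<lambda>n::nat. if n = 0 then 2 - z else 4 * real n * (2 - z))"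
definition b :: "nat \<Rightarrow> real" where "b = (\<lambda>n::nat. - ((2 * real n + 1)^2 * z^2))"

definition R :: "nat \<Rightarrow> real" where "R k = dd k * Gs k"

lemma R_rec: "k \<ge> 1 \<Longrightarrow> R (k+1) = a k * R k + b (k-1) * R (k-1)"
proof -
  assume k: "k \<ge> 1"
  then obtain m where m: "k = Suc m" by (cases k) auto
  have e1: "dd (k+1) * Gs (k+1) = dd k * ((2 * real k + 1) * Gs (k+1))" using dd_Suc[of k] by simp
  have e2: "(2 * real k + 1) * Gs (k+1) = 4 * real k * (2 - z) * Gs k - (2 * real k - 1) * z^2 * Gs (k - 1)"
    using Grec[OF k] by simp
  have e3: "dd k = dd m * (2 * real m + 1)" using dd_Suc m by simp
  have "R (k+1) = dd k * (4 * real k * (2 - z) * Gs k - (2 * real k - 1) * z^2 * Gs (k - 1))"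
    unfolding R_def e1 e2 ..
  also have "\<dots> = a k * R k + b (k-1) * R (k-1)"
    unfolding R_def a_def b_def using m e3 by (simp add: algebra_simps power2_eq_square)
  finally show ?thesis .
qed

lemma R_eq: "R k = K * PP a b k - 2 * E * QQ a b k"
proof (induction k rule: nat_less_induct)
  case (1 k)
  show ?case
  proof (cases "k \<le> 1")
    case True
    then consider "k = 0" | "k = 1" by linarith
    then show ?thesis
      by cases (auto simp: R_def dd_def G0 G1' PP_def QQ_def a_def algebra_simps)
  next
    case False
    then obtain m where m: "k = m + 1" "m \<ge> 1" by (cases k) auto
    have "R k = a m * R m + b (m-1) * R (m-1)" using R_rec[OF m(2)] m by simp
    also have "\<dots> = a m * (K * PP a b m - 2 * E * QQ a b m) + b (m-1) * (K * PP a b (m-1) - 2 * E * QQ a b (m-1))"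
      using 1 m by simp
    also have "\<dots> = K * PP a b k - 2 * E * QQ a b k"
      using PP_rec[OF m(2)] QQ_rec[OF m(2)] m by (simp add: algebra_simps)
    finally show ?thesis .
  qed
qed

lemma Cas: "QQ a b (k+1) * R k - QQ a b k * R (k+1) = K * dd k ^ 2 * z ^ (2*k)"
proof (induction k)
  case 0 then show ?case by (simp add: QQ_def R_def dd_def G0)
next
  case (Suc k)
  have "QQ a b (Suc k + 1) * R (Suc k) - QQ a b (Suc k) * R (Suc k + 1)
     = - b k * (QQ a b (k+1) * R k - QQ a b k * R (k+1))"
    using QQ_rec[of "Suc k" a b] R_rec[of "Suc k"] by (simp add: algebra_simps)
  also have "\<dots> = K * dd (Suc k) ^ 2 * z ^ (2 * Suc k)"
    using Suc by (simp add: b_def dd_Suc power2_eq_square algebra_simps)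
  finally show ?case .
qed

lemma R_pos: "R k > 0" using dd_pos Gpos by (simp add: R_def)

definition dterm :: "nat \<Rightarrow> real" where
  "dterm j = K * z ^ (2*j) / ((2 * real j + 1) * Gs j * Gs (j+1))"

lemma dterm_step: "QQ a b (Suc k) / R (Suc k) - QQ a b k / R k = dterm k"
proof -
  have h1: "QQ a b (Suc k) / R (Suc k) - QQ a b k / R k
      = (QQ a b (k+1) * R k - QQ a b k * R (k+1)) / (R k * R (k+1))"
    using R_pos[of k] R_pos[of "k+1"] by (simp add: field_simps)
  have h2: "R k * R (k+1) = dd k ^ 2 * ((2 * real k + 1) * Gs k * Gs (k+1))"
    unfolding R_def by (simp add: dd_Suc power2_eq_square algebra_simps)
  have h3: "K * dd k ^ 2 * z ^ (2*k) / (dd k ^ 2 * ((2 * real k + 1) * Gs k * Gs (k+1))) = dterm k"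
    using dd_pos[of k] by (simp add: dterm_def)
  show ?thesis unfolding h1 Cas h2 h3 ..
qed

lemma QQ_over_R: "QQ a b k / R k = (\<Sum>j<k. dterm j)"
proof (induction k)
  case 0 then show ?case by (simp add: QQ_def)
next
  case (Suc k)
  then show ?case using dterm_step[of k] by simp
qed

lemma dterm_pos: "z \<noteq> 0 \<Longrightarrow> dterm j > 0"
  using Gpos[of j] Gpos[of "j+1"] K_pos by (auto simp: dterm_def power_mult intro!: divide_pos_pos mult_pos_pos)

lemma main_identity:
  assumes "z \<noteq> 0"
  shows "cf_q a b n > 0" and "2 * E / K - cf_p a b n / cf_q a b n = - 1 / (K * (\<Sum>j\<le>n. dterm j))"
proof -
  have S: "QQ a b (n+1) / R (n+1) = (\<Sum>j\<le>n. dterm j)"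
    using QQ_over_R[of "n+1"] by (simp add: lessThan_Suc_atMost)
  have Spos: "(\<Sum>j\<le>n. dterm j) > 0" using dterm_pos[OF assms]
    by (intro sum_pos) auto
  have q: "cf_q a b n = QQ a b (n+1)" "cf_p a b n = PP a b (n+1)" by (simp_all add: QQ_def PP_def)
  have "QQ a b (n+1) = (\<Sum>j\<le>n. dterm j) * R (n+1)" using S R_pos[of "n+1"] by (simp add: field_simps)
  hence qpos: "QQ a b (n+1) > 0" using Spos R_pos[of "n+1"] by simp
  then show "cf_q a b n > 0" using q by simp
  have "2 * E / K - cf_p a b n / cf_q a b n = (2 * E * QQ a b (n+1) - K * PP a b (n+1)) / (K * QQ a b (n+1))"
    using q qpos K_pos by (simp add: field_simps)
  also have "\<dots> = - R (n+1) / (K * QQ a b (n+1))" using R_eq[of "n+1"] by simp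
  also have "\<dots> = - 1 / (K * (\<Sum>j\<le>n. dterm j))"
    unfolding S[symmetric] using R_pos[of "n+1"] qpos K_pos by (simp add: field_simps)
  finally show "2 * E / K - cf_p a b n / cf_q a b n = - 1 / (K * (\<Sum>j\<le>n. dterm j))" .
qed

end


definition DD :: "real \<Rightarrow> real \<Rightarrow> real" where "DD z t = 1 - z * (sin t)^2"

lemma DD_pos: "z < 1 \<Longrightarrow> DD z t > 0"
proof -
  assume z: "z < 1"
  have h: "(sin t)^2 \<le> 1" "(sin t)^2 \<ge> 0" by (simp_all add: abs_square_le_1)
  show ?thesis
  proof (cases "z \<le> 0")
    case True
    have "z*(sin t)^2 \<le> 0" by (rule mult_nonpos_nonneg) (use True h in auto)
    then show ?thesis by (simp add: DD_def)
  next
    case False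
    then have "z * (sin t)^2 \<le> z" using h by (simp add: mult_left_le)
    then show ?thesis using z by (simp add: DD_def)
  qed
qed

lemma DD_deriv: "((DD z) has_real_derivative (- 2 * z * sin t * cos t)) (at t within S)"
  unfolding DD_def by (auto intro!: derivative_eq_intros simp: power2_eq_square)

lemma cont_DD: "continuous_on S (DD z)" unfolding DD_def by (intro continuous_intros)

definition fG :: "real \<Rightarrow> nat \<Rightarrow> real \<Rightarrow> real" where
  "fG z k t = (sin t * cos t)^(2*k) / (DD z t ^ k * sqrt (DD z t))"

definition Gs :: "real \<Rightarrow> nat \<Rightarrow> real" where
  "Gs z k = z^(2*k) * integral {0..pi/2} (fG z k)"

lemma DD_ne: "z < 1 \<Longrightarrow> DD z t \<noteq> 0" using DD_pos[of z t] by simp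
lemma DD_ge: "z < 1 \<Longrightarrow> DD z t \<ge> 0" using DD_pos[of z t] by simp

lemma cont_fG: "z < 1 \<Longrightarrow> continuous_on S (fG z k)"
  unfolding fG_def
  by (intro continuous_intros cont_DD) (auto simp: DD_ne DD_ge)

lemma int_fG: "z < 1 \<Longrightarrow> (fG z k has_integral integral {0..pi/2} (fG z k)) {0..pi/2}"
  by (intro integrable_integral integrable_continuous_interval cont_fG)

lemma fG_pos: "z < 1 \<Longrightarrow> t \<in> {0<..<pi/2} \<Longrightarrow> fG z k t > 0"
proof -
  assume z: "z < 1" and t: "t \<in> {0<..<pi/2}"
  have "sin t > 0" using t by (auto intro: sin_gt_zero)
  moreover have "cos t > 0" using t by (auto intro: cos_gt_zero)
  ultimately show ?thesis using DD_pos[OF z, of t] unfolding fG_def by (auto intro!: divide_pos_pos)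
qed

lemma fG_nonneg: "z < 1 \<Longrightarrow> t \<in> {0..pi/2} \<Longrightarrow> fG z k t \<ge> 0"
proof -
  assume z: "z < 1" and t: "t \<in> {0..pi/2}"
  have "sin t \<ge> 0" using t by (auto intro: sin_ge_zero)
  moreover have "cos t \<ge> 0" using t by (auto intro: cos_ge_zero)
  ultimately show ?thesis using DD_pos[OF z, of t] unfolding fG_def by (auto intro!: divide_nonneg_pos)
qed

lemma Gs0: "Gs z 0 = ellK z"
  unfolding Gs_def ellK_def fG_def DD_def by simp

lemma intpos:
  assumes z: "z < 1"
  shows "integral {0..pi/2} (fG z k) > 0"
proof -
  have "integral {0..pi/2} (\<lambda>_. 0::real) < integral {0..pi/2} (fG z k)"
  proof (rule integral_less_real)
    show "{0<..<pi/2} \<noteq> {}" using pi_gt_zero by (auto simp: not_le[symmetric] dest!: linorder_not_le[THEN iffD2]) 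
  qed (use cont_fG[OF z] fG_pos[OF z] in auto)
  then show ?thesis by simp
qed

lemma Gs_pos: "z < 1 \<Longrightarrow> z \<noteq> 0 \<Longrightarrow> Gs z k > 0"
  unfolding Gs_def using intpos[of z k] by (simp add: power_mult)


lemma sqrt_deriv_DD: "z < 1 \<Longrightarrow> ((\<lambda>t. sqrt (DD z t)) has_real_derivative (- z * sin t * cos t / sqrt (DD z t))) (at t within S)"
proof -
  assume z: "z < 1"
  have "((\<lambda>t. sqrt (DD z t)) has_real_derivative (inverse (sqrt (DD z t)) / 2 * (- 2 * z * sin t * cos t))) (at t within S)"
    by (rule DERIV_chain2[OF DERIV_real_sqrt DD_deriv]) (rule DD_pos[OF z])
  then show ?thesis by (simp add: field_simps)
qed

lemma h1_deriv: assumes z: "z < 1"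
  shows "((\<lambda>t. z * sin t * cos t / sqrt (DD z t)) has_real_derivative
     (z*((cos t)^2 - (sin t)^2)/sqrt(DD z t) + z^2*(sin t*cos t)^2/(DD z t * sqrt(DD z t)))) (at t within S)"
proof -
  have p: "sqrt (DD z t) > 0" using DD_pos[OF z] by simp
  have sq: "sqrt (DD z t) * sqrt (DD z t) = DD z t" using DD_pos[OF z, of t] by simp
  have d1: "((\<lambda>t. z * sin t * cos t) has_real_derivative z*((cos t)^2 - (sin t)^2)) (at t within S)"
    by (auto intro!: derivative_eq_intros simp: power2_eq_square algebra_simps)
  show ?thesis
    apply (rule DERIV_cong[OF DERIV_divide[OF d1 sqrt_deriv_DD[OF z]]])
    using p apply simp
    using p sq by (simp add: field_simps power2_eq_square)
qed

lemma alg1: fixes Q D S C z :: real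
  assumes "Q > 0" "Q*Q = D" "D = 1 - z*S*S" "C*C = 1 - S*S"
  shows "(2-z)*(1/Q) - 2*Q + (z*(C^2 - S^2)/Q + z^2*(S*C)^2/(D*Q)) = z^2*((S*C)^(2*1)/(D^1*Q))"
proof -
  have "D > 0" using assms by (metis mult_pos_pos)
  then show ?thesis using assms apply (simp add: field_simps power2_eq_square)
    by algebra
qed

lemma ftc_real: "a \<le> b \<Longrightarrow> (\<And>x. x\<in>{a..b} \<Longrightarrow> (f has_real_derivative f' x) (at x within {a..b})) \<Longrightarrow> (f' has_integral (f b - f a)) {a..b}"
  by (rule fundamental_theorem_of_calculus) (auto simp: has_real_derivative_iff_has_vector_derivative[symmetric])

lemma int_K: "z < 1 \<Longrightarrow> ((\<lambda>t. 1 / sqrt (DD z t)) has_integral ellK z) {0..pi/2}"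
  unfolding ellK_def DD_def[symmetric]
  by (intro integrable_integral integrable_continuous_interval continuous_intros cont_DD) (auto simp: DD_ne DD_ge)

lemma int_E: "z < 1 \<Longrightarrow> ((\<lambda>t. sqrt (DD z t)) has_integral ellE z) {0..pi/2}"
  unfolding ellE_def DD_def[symmetric]
  by (intro integrable_integral integrable_continuous_interval continuous_intros cont_DD)

lemma Gs1: assumes z: "z < 1" shows "Gs z 1 = (2 - z) * ellK z - 2 * ellE z"
proof -
  let ?h = "\<lambda>t. z * sin t * cos t / sqrt (DD z t)"
  let ?h' = "\<lambda>t. z*((cos t)^2 - (sin t)^2)/sqrt(DD z t) + z^2*(sin t*cos t)^2/(DD z t * sqrt(DD z t))"
  have i1: "(?h' has_integral (?h (pi/2) - ?h 0)) {0..pi/2}"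
    by (rule ftc_real) (auto intro: h1_deriv[OF z])
  have h0: "?h (pi/2) - ?h 0 = 0" by simp
  have i2: "((\<lambda>t. (2 - z) * (1 / sqrt (DD z t)) - 2 * sqrt (DD z t) + ?h' t) has_integral ((2 - z) * ellK z - 2 * ellE z + 0)) {0..pi/2}"
    by (intro has_integral_add has_integral_diff has_integral_mult_right int_K int_E z) (use i1 h0 in simp)
  have eq: "(2 - z) * (1 / sqrt (DD z t)) - 2 * sqrt (DD z t) + ?h' t = z^2 * fG z 1 t" for t
  proof -
    have p: "sqrt (DD z t) > 0" using DD_pos[OF z] by simp
    have sq: "sqrt (DD z t) * sqrt (DD z t) = DD z t" using DD_pos[OF z, of t] by simp
    have c: "cos t * cos t = 1 - sin t * sin t" using sin_cos_squared_add3[of t] by linarith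
    show ?thesis unfolding fG_def by (rule alg1[OF p sq _ c]) (simp add: DD_def power2_eq_square)
  qed
  have "((\<lambda>t. z^2 * fG z 1 t) has_integral ((2 - z) * ellK z - 2 * ellE z)) {0..pi/2}"
    using i2 unfolding eq by simp
  then have "integral {0..pi/2} (\<lambda>t. z^2 * fG z 1 t) = (2 - z) * ellK z - 2 * ellE z" by (rule integral_unique)
  then show ?thesis unfolding Gs_def by simp
qed

lemma alg2: fixes Q D S C z X Y n :: real
  assumes "Q > 0" "Y > 0" "Q*Q = D" "D = 1 - z*S*S" "C*C = 1 - S*S"
  shows "((X*(S*C)) * (- 2*S*C + 2*z*S^3*C) + (1 + 2*n) * ((C*C - S*S) * X) * (1/2 - S^2 + z/2*S^4)) * (Y*D*Q)
       - (X*(S*C)) * (1/2 - S^2 + z/2*S^4) * (Y*D*(- z*S*C/Q) + (1 + n) * ((- 2*z*S*C) * Y) * Q)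
    = ((n + 3/2) * z^2 * (X*(S*C)^4/(Y*D^2*Q)) - 2*(n+1)*(2-z) * (X*(S*C)^2/(Y*D*Q)) + (n+1/2) * (X/(Y*Q))) * ((Y*D*Q)*(Y*D*Q))"
proof -
  have "D > 0" using assms by (metis mult_pos_pos)
  then show ?thesis using assms apply (simp add: field_simps power2_eq_square)
    by algebra
qed

definition HH :: "real \<Rightarrow> nat \<Rightarrow> real \<Rightarrow> real" where
  "HH z n t = (sin t * cos t)^(Suc (2*n)) * (1/2 - (sin t)^2 + z/2*(sin t)^4) / (DD z t ^ Suc n * sqrt (DD z t))"

lemma HH_deriv: assumes z: "z < 1"
  shows "(HH z n has_real_derivative
     ((real n + 3/2) * z^2 * fG z (n+2) t - 2*(real n+1)*(2-z) * fG z (n+1) t + (real n+1/2) * fG z n t)) (at t within S)"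
proof -
  let ?S = "sin t" and ?C = "cos t" and ?Q = "sqrt (DD z t)" and ?D = "DD z t"
  let ?X = "(sin t * cos t)^(2*n)" and ?Y = "DD z t ^ n"
  have p: "?Q > 0" using DD_pos[OF z] by simp
  have Yp: "?Y > 0" using DD_pos[OF z] by simp
  have sq: "?Q * ?Q = ?D" using DD_pos[OF z, of t] by simp
  have c: "?C * ?C = 1 - ?S * ?S" using sin_cos_squared_add3[of t] by linarith
  have dsc: "((\<lambda>t. sin t * cos t) has_real_derivative (?C * ?C - ?S * ?S)) (at t within S)"
    by (auto intro!: derivative_eq_intros simp: algebra_simps)
  have dN1: "((\<lambda>t. (sin t * cos t)^(Suc (2*n))) has_real_derivative (1 + real (2*n)) * ((?C * ?C - ?S * ?S) * ?X)) (at t within S)"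
    by (rule DERIV_power_Suc[OF dsc])
  have dL: "((\<lambda>t. 1/2 - (sin t)^2 + z/2*(sin t)^4) has_real_derivative (- 2*?S*?C + 2*z*?S^3*?C)) (at t within S)"
    by (auto intro!: derivative_eq_intros simp: algebra_simps power2_eq_square power3_eq_cube power4_eq_xxxx)
  have dM1: "((\<lambda>t. DD z t ^ Suc n) has_real_derivative (1 + real n) * ((- 2 * z * ?S * ?C) * ?Y)) (at t within S)"
    by (rule DERIV_power_Suc[OF DD_deriv])
  have dM: "((\<lambda>t. DD z t ^ Suc n * sqrt (DD z t)) has_real_derivative
      (DD z t ^ Suc n * (- z * ?S * ?C / ?Q) + (1 + real n) * ((- 2 * z * ?S * ?C) * ?Y) * ?Q)) (at t within S)"
    by (rule DERIV_mult'[OF dM1 sqrt_deriv_DD[OF z]])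
  have dN: "((\<lambda>t. (sin t * cos t)^(Suc (2*n)) * (1/2 - (sin t)^2 + z/2*(sin t)^4)) has_real_derivative
      ((sin t * cos t)^(Suc (2*n)) * (- 2*?S*?C + 2*z*?S^3*?C) + (1 + real (2*n)) * ((?C * ?C - ?S * ?S) * ?X) * (1/2 - ?S^2 + z/2*?S^4))) (at t within S)"
    by (rule DERIV_mult'[OF dN1 dL])
  have Mne: "DD z t ^ Suc n * sqrt (DD z t) \<noteq> 0" using p DD_pos[OF z, of t] by simp
  have e1: "(sin t * cos t)^(Suc (2*n)) = ?X * (?S * ?C)" by simp
  have e2: "DD z t ^ Suc n = ?Y * ?D" by simp
  have e3n: "2*(n+2) = 2*n + 4" by simp
  have e3a: "(sin t * cos t)^(2*(n+2)) = ?X*(?S*?C)^4"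
    by (simp only: e3n power_add)
  have e3b: "DD z t^(n+2) = ?Y*?D^2" by (simp only: power_add)
  have e3: "fG z (n+2) t = ?X*(?S*?C)^4/(?Y*?D^2*?Q)" unfolding fG_def e3a e3b ..
  have e4n: "2*(n+1) = 2*n + 2" by simp
  have e4a: "(sin t * cos t)^(2*(n+1)) = ?X*(?S*?C)^2" by (simp only: e4n power_add)
  have e4b: "DD z t^(n+1) = ?Y*?D" by (simp only: power_add power_one_right)
  have e4: "fG z (n+1) t = ?X*(?S*?C)^2/(?Y*?D*?Q)" unfolding fG_def e4a e4b ..
  have e5: "fG z n t = ?X/(?Y*?Q)" unfolding fG_def by simp
  have key: "((sin t * cos t)^(Suc (2*n)) * (- 2*?S*?C + 2*z*?S^3*?C) + (1 + real (2*n)) * ((?C * ?C - ?S * ?S) * ?X) * (1/2 - ?S^2 + z/2*?S^4)) * (DD z t ^ Suc n * sqrt (DD z t))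
      - (sin t * cos t)^(Suc (2*n)) * (1/2 - (sin t)^2 + z/2*(sin t)^4) * (DD z t ^ Suc n * (- z * ?S * ?C / ?Q) + (1 + real n) * ((- 2 * z * ?S * ?C) * ?Y) * ?Q)
    = ((real n + 3/2) * z^2 * fG z (n+2) t - 2*(real n+1)*(2-z) * fG z (n+1) t + (real n+1/2) * fG z n t) * ((DD z t ^ Suc n * sqrt (DD z t)) * (DD z t ^ Suc n * sqrt (DD z t)))"
  proof -
    have hD: "?D = 1 - z*?S*?S" by (simp add: DD_def power2_eq_square)
    note inst = alg2[OF p Yp sq hD c, where n="real n" and X="?X"]
    show ?thesis unfolding e1 e2 e3 e4 e5 using inst by simp
  qed
  show ?thesis unfolding HH_def
    apply (rule DERIV_cong[OF DERIV_divide[OF dN dM Mne]])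
    using key Mne by (simp add: field_simps)
qed

lemma I_rec: assumes z: "z < 1"
  shows "(real n + 3/2) * z^2 * integral {0..pi/2} (fG z (n+2)) - 2*(real n+1)*(2-z) * integral {0..pi/2} (fG z (n+1))
     + (real n+1/2) * integral {0..pi/2} (fG z n) = 0"
proof -
  have i: "((\<lambda>t. (real n + 3/2) * z^2 * fG z (n+2) t - 2*(real n+1)*(2-z) * fG z (n+1) t + (real n+1/2) * fG z n t)
       has_integral (HH z n (pi/2) - HH z n 0)) {0..pi/2}"
    by (rule ftc_real) (simp, rule HH_deriv[OF z])
  have h0: "HH z n (pi/2) - HH z n 0 = 0" by (simp add: HH_def)
  have i2: "((\<lambda>t. (real n + 3/2) * z^2 * fG z (n+2) t - 2*(real n+1)*(2-z) * fG z (n+1) t + (real n+1/2) * fG z n t)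
       has_integral ((real n + 3/2) * z^2 * integral {0..pi/2} (fG z (n+2)) - 2*(real n+1)*(2-z) * integral {0..pi/2} (fG z (n+1))
     + (real n+1/2) * integral {0..pi/2} (fG z n))) {0..pi/2}"
    by (intro has_integral_add has_integral_diff has_integral_mult_right int_fG z)
  show ?thesis using has_integral_unique[OF i i2] h0 by simp
qed

lemma Gs_rec: assumes z: "z < 1" and k: "k \<ge> 1"
  shows "(2 * real k + 1) * Gs z (k+1) = 4 * real k * (2 - z) * Gs z k - (2 * real k - 1) * z^2 * Gs z (k - 1)"
proof -
  obtain n where n: "k = n + 1" using k by (cases k) auto
  let ?I0 = "integral {0..pi/2} (fG z n)" and ?I1 = "integral {0..pi/2} (fG z (n+1))" and ?I2 = "integral {0..pi/2} (fG z (n+2))"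
  have r: "(real n + 3/2) * z^2 * ?I2 = 2*(real n+1)*(2-z) * ?I1 - (real n+1/2) * ?I0"
    using I_rec[OF z, of n] by linarith
  have p2: "z^(2*(n+2)) = z^(2*n+2) * z^2"
  proof -
    have "2*(n+2) = (2*n+2) + 2" by simp
    then show ?thesis by (simp only: power_add)
  qed
  have p1: "z^(2*(n+1)) = z^(2*n+2)" by simp
  have p0: "z^(2*n) * z^2 = z^(2*n+2)" by (simp only: power_add)
  have kk: "k + 1 = n + 2" "k - 1 = n" using n by auto
  have "(2 * real k + 1) * Gs z (k+1) = 2 * z^(2*n+2) * ((real n + 3/2) * z^2 * ?I2)"
    unfolding Gs_def kk p2 using n by (simp add: algebra_simps)
  also have "\<dots> = 2 * z^(2*n+2) * (2*(real n+1)*(2-z) * ?I1 - (real n+1/2) * ?I0)" unfolding r ..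
  also have "\<dots> = 4 * real k * (2 - z) * (z^(2*(n+1)) * ?I1) - (2 * real k - 1) * (z^(2*n) * z^2) * ?I0"
    unfolding p1 p0 using n by (simp add: algebra_simps)
  also have "\<dots> = 4 * real k * (2 - z) * Gs z k - (2 * real k - 1) * z^2 * Gs z (k - 1)"
    unfolding Gs_def kk n by (simp add: algebra_simps)
  finally show ?thesis .
qed


definition WW :: "nat \<Rightarrow> real" where "WW k = integral {-1..1} (\<lambda>x. (1 - x^2)^k)"

lemma WW_int: "((\<lambda>x::real. (1 - x^2)^k) has_integral WW k) {-1..1}"
  unfolding WW_def by (intro integrable_integral integrable_continuous_interval continuous_intros)

lemma WW_rec: "(2 * real k + 3) * WW (k+1) = 2 * (real k + 1) * WW k"
proof -
  have d: "((\<lambda>x::real. x * (1 - x^2)^(Suc k)) has_real_derivative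
      ((2 * real k + 3) * (1 - x^2)^(k+1) - 2 * (real k + 1) * (1 - x^2)^k)) (at x within S)" for x S
  proof -
    have dp: "((\<lambda>x::real. (1 - x^2)^Suc k) has_real_derivative (1 + real k) * ((-2*x) * (1-x^2)^k)) (at x within S)"
      by (rule DERIV_power_Suc) (auto intro!: derivative_eq_intros)
    have "((\<lambda>x::real. x * (1 - x^2)^(Suc k)) has_real_derivative
       (x * ((1 + real k) * ((-2*x) * (1-x^2)^k)) + 1 * (1 - x^2)^(Suc k))) (at x within S)"
      by (rule DERIV_mult'[OF DERIV_ident dp])
    then have "((\<lambda>x::real. x * (1 - x^2)^(Suc k)) has_real_derivative
       (1 * (1 - x^2)^(Suc k) + (1 + real k) * ((- 2 * x) * (1 - x^2)^k) * x)) (at x within S)"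
      by (simp add: algebra_simps)
    moreover have "1 * (1 - x^2)^(Suc k) + (1 + real k) * ((- 2 * x) * (1 - x^2)^k) * x
       = (2 * real k + 3) * (1 - x^2)^(k+1) - 2 * (real k + 1) * (1 - x^2)^k"
    proof -
      have "x * x = 1 - (1 - x^2)" by (simp add: power2_eq_square)
      have e: "(1 + real k) * ((- 2 * x) * (1 - x^2)^k) * x = - 2 * (1 + real k) * (x*x) * (1 - x^2)^k" by (simp add: algebra_simps)
      show ?thesis unfolding e \<open>x * x = _\<close> by (simp add: algebra_simps)
    qed
    ultimately show ?thesis by simp
  qed
  have i: "((\<lambda>x. (2 * real k + 3) * (1 - x^2)^(k+1) - 2 * (real k + 1) * (1 - x^2)^k) has_integral
      ((\<lambda>x::real. x * (1 - x^2)^(Suc k)) 1 - (\<lambda>x::real. x * (1 - x^2)^(Suc k)) (-1))) {-1..1}"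
    by (rule ftc_real[OF _ d]) simp
  have i2: "((\<lambda>x. (2 * real k + 3) * (1 - x^2)^(k+1) - 2 * (real k + 1) * (1 - x^2)^k) has_integral
      ((2 * real k + 3) * WW (k+1) - 2 * (real k + 1) * WW k)) {-1..1}"
    by (intro has_integral_diff has_integral_mult_right WW_int)
  show ?thesis using has_integral_unique[OF i i2] by simp
qed

lemma WW0: "WW 0 = 2" unfolding WW_def by simp

lemma WW_lower: "WW k \<ge> 2 / (2 * real k + 1)"
proof (induction k)
  case 0 then show ?case by (simp add: WW0)
next
  case (Suc k)
  have "WW (Suc k) = 2 * (real k + 1) / (2 * real k + 3) * WW k" using WW_rec[of k] by (simp add: field_simps)
  also have "\<dots> \<ge> 2 * (real k + 1) / (2 * real k + 3) * (2 / (2 * real k + 1))"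
    by (intro mult_left_mono Suc) auto
  finally have "WW (Suc k) \<ge> 2 * (real k + 1) / (2 * real k + 3) * (2 / (2 * real k + 1))" .
  moreover have "2 * (real k + 1) / (2 * real k + 3) * (2 / (2 * real k + 1)) \<ge> 2 / (2 * real (Suc k) + 1)"
  proof -
    have a1: "2 * (real k + 1) / (2 * real k + 3) * (2 / (2 * real k + 1)) = (2 / (2 * real k + 3)) * (2 * (real k + 1) / (2 * real k + 1))"
      by (simp add: field_simps)
    have a2: "2 * (real k + 1) / (2 * real k + 1) \<ge> 1" by (simp add: field_simps)
    have a3: "2 / (2 * real (Suc k) + 1) = (2 / (2 * real k + 3)) * 1" by (simp add: field_simps)
    show ?thesis unfolding a1 a3 by (rule mult_left_mono[OF a2]) simp
  qed
  ultimately show ?case by linarith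
qed

lemma WW_pos: "WW k > 0" using WW_lower[of k] by (smt (verit) divide_pos_pos of_nat_0_le_iff)

definition VV :: "nat \<Rightarrow> real" where "VV n = (\<Prod>k=1..n. (4*real k^2) / (4*real k^2 - 1))"

lemma WW_VV: "(real n + 1) * WW n * WW (n+1) = 2 * VV (n+1)"
proof (induction n)
  case 0
  have "WW 1 = 4/3" using WW_rec[of 0] WW0 by simp
  then show ?case by (simp add: WW0 VV_def)
next
  case (Suc n)
  have r1: "WW (n+2) = 2 * (real n + 2) / (2 * real n + 5) * WW (n+1)"
    using WW_rec[of "n+1"] by (simp add: field_simps)
  have r0: "WW n = (2 * real n + 3) / (2 * (real n + 1)) * WW (n+1)"
    using WW_rec[of n] by (simp add: field_simps)
  have V0: "VV (Suc (Suc n)) = VV (Suc n) * (4 * real (Suc (Suc n))^2 / (4 * real (Suc (Suc n))^2 - 1))"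
    unfolding VV_def by simp
  have V1: "4 * real (Suc (Suc n))^2 - 1 = (2*real n+3)*(2*real n+5)" "real (Suc (Suc n)) = real n + 2"
    by (simp_all add: power2_eq_square algebra_simps)
  have V: "VV (Suc (Suc n)) = VV (Suc n) * (4 * (real n + 2)^2 / ((2*real n+3)*(2*real n+5)))"
    using V0 unfolding V1(1) unfolding V1(2) .
  have "(real (Suc n) + 1) * WW (Suc n) * WW (Suc n + 1) = (real n + 2) * WW (n+1) * WW (n+2)" by simp
  also have "\<dots> = ((real n + 1) * WW n * WW (n+1)) * (4 * (real n + 2)^2 / ((2 * real n + 3) * (2 * real n + 5)))"
  proof -
    have h: "2 * real n + 5 \<noteq> 0" "real n + 1 \<noteq> 0" "2 * real n + 3 \<noteq> 0" by auto
    have L: "(real n + 2) * WW (n+1) * WW (n+2) = 2 * (real n + 2)^2 * WW (n+1)^2 / (2 * real n + 5)"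
      unfolding r1 using h by (simp add: field_simps power2_eq_square)
    have R: "((real n + 1) * WW n * WW (n+1)) * (4 * (real n + 2)^2 / ((2 * real n + 3) * (2 * real n + 5)))
       = 2 * (real n + 2)^2 * WW (n+1)^2 / (2 * real n + 5)"
    proof -
      have e: "(real n + 1) * WW n * WW (n+1) = (2 * real n + 3) / 2 * WW (n+1)^2"
        unfolding r0 using h by (simp add: field_simps power2_eq_square)
      have gen: "\<And>a b c X :: real. a > 0 \<Longrightarrow> b > 0 \<Longrightarrow> a / 2 * X * (4 * c / (a * b)) = 2 * c * X / b"
        by (simp add: field_simps)
      show ?thesis unfolding e by (rule gen) auto
    qed
    show ?thesis using L R by metis
  qed
  also have "\<dots> = 2 * VV (Suc n + 1)" unfolding Suc using V by simp
  finally show ?case .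
qed

lemma WW_prod_lim: "(\<lambda>n. (2 * real n + 1) * WW n * WW (n+1)) \<longlonglongrightarrow> 2 * pi"
proof -
  have "(\<lambda>n. VV (n+1)) \<longlonglongrightarrow> pi/2" unfolding VV_def using wallis by (rule LIMSEQ_ignore_initial_segment)
  then have l: "(\<lambda>n. 2 * (2 * real n + 1) / (real n + 1) * VV (n+1)) \<longlonglongrightarrow> 2 * 2 * (pi/2)"
    by (intro tendsto_mult tendsto_const) real_asymp
  have "(2 * real n + 1) * WW n * WW (n+1) = 2 * (2 * real n + 1) / (real n + 1) * VV (n+1)" for n
  proof -
    have "(2 * real n + 1) * WW n * WW (n+1) = (2 * real n + 1) / (real n + 1) * ((real n + 1) * WW n * WW (n+1))"
      by (simp add: field_simps)
    then show ?thesis unfolding WW_VV by simp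
  qed
  then show ?thesis using l by simp
qed

lemma pow_over_WW: assumes "0 \<le> q" "q < 1" shows "(\<lambda>k. q^k / WW k) \<longlonglongrightarrow> 0"
proof (rule tendsto_sandwich[of "\<lambda>_. 0" _ _ "\<lambda>k. (2 * real k + 1) * q^k / 2"])
  show "\<forall>\<^sub>F k in sequentially. 0 \<le> q^k / WW k"
    by (intro always_eventually allI divide_nonneg_pos) (use assms WW_pos in auto)
  show "\<forall>\<^sub>F k in sequentially. q^k / WW k \<le> (2 * real k + 1) * q^k / 2"
  proof (intro always_eventually allI)
    fix k
    have "q^k / WW k \<le> q^k / (2 / (2 * real k + 1))"
      by (rule divide_left_mono[OF WW_lower]) (use assms WW_pos in auto)
    then show "q^k / WW k \<le> (2 * real k + 1) * q^k / 2" by (simp add: field_simps)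
  qed
  have nq: "norm q < 1" using assms by simp
  have h1: "(\<lambda>k. real k * q^k) \<longlonglongrightarrow> 0" using powser_times_n_limit_0[OF nq] by simp
  have h2: "(\<lambda>k. q^k) \<longlonglongrightarrow> 0" using LIMSEQ_power_zero[OF nq] by simp
  have "(\<lambda>k. (2 * (real k * q^k) + q^k) / 2) \<longlonglongrightarrow> (2 * 0 + 0) / 2"
    by (rule tendsto_divide[OF tendsto_add[OF tendsto_mult[OF tendsto_const h1] h2] tendsto_const]) simp
  then show "(\<lambda>k. (2 * real k + 1) * q^k / 2) \<longlonglongrightarrow> 0" by (simp add: algebra_simps)
qed simp


lemma int_le_const:
  fixes f :: "real \<Rightarrow> real"
  assumes "c \<le> d" "f integrable_on {c..d}" "\<And>x. x \<in> {c..d} \<Longrightarrow> f x \<le> M"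
  shows "integral {c..d} f \<le> M * (d - c)"
proof -
  have "integral {c..d} f \<le> integral {c..d} (\<lambda>_. M)"
    by (rule integral_le) (use assms in auto)
  then show ?thesis using assms(1) by (simp add: mult.commute)
qed

lemma int_nonneg:
  fixes f :: "real \<Rightarrow> real"
  assumes "f integrable_on {c..d}" "\<And>x. x \<in> {c..d} \<Longrightarrow> f x \<ge> 0"
  shows "integral {c..d} f \<ge> 0"
  by (rule integral_nonneg) (use assms in auto)

lemma WW_window:
  assumes "-1 \<le> u" "u \<le> -e" "e \<le> v" "v \<le> 1" "0 < e"
  shows "integral {u..v} (\<lambda>x::real. (1 - x^2)^k) \<le> WW k"
    and "integral {u..v} (\<lambda>x::real. (1 - x^2)^k) \<ge> WW k - 2 * (1 - e^2)^k"
proof -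
  let ?f = "\<lambda>x::real. (1 - x^2)^k"
  have intg: "?f integrable_on {c..d}" for c d by (intro integrable_continuous_interval continuous_intros)
  have nn: "?f x \<ge> 0" if "x \<in> {-1..1}" for x
  proof -
    have "x^2 \<le> 1" using that by (auto simp: abs_square_le_1)
    then show ?thesis by simp
  qed
  have c1: "integral {-1..u} ?f + integral {u..1} ?f = WW k"
    unfolding WW_def by (rule Henstock_Kurzweil_Integration.integral_combine[where a="-1" and c=u and b=1 and f="?f"]) (use assms intg in auto)
  have c2: "integral {u..v} ?f + integral {v..1} ?f = integral {u..1} ?f"
    by (rule Henstock_Kurzweil_Integration.integral_combine[where a=u and c=v and b=1 and f="?f"]) (use assms intg in auto)
  have p1: "integral {-1..u} ?f \<ge> 0" by (rule int_nonneg[OF intg]) (use assms in \<open>auto intro!: nn\<close>)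
  have p2: "integral {v..1} ?f \<ge> 0" by (rule int_nonneg[OF intg]) (use assms in \<open>auto intro!: nn\<close>)
  have bnd: "?f x \<le> (1 - e^2)^k" if "x \<in> {-1..1}" "e \<le> \<bar>x\<bar>" for x
  proof -
    have "e^2 \<le> x^2" using that assms(5) by (metis abs_le_square_iff abs_of_pos)
    moreover have "x^2 \<le> 1" using that by (auto simp: abs_square_le_1)
    ultimately show ?thesis by (intro power_mono) auto
  qed
  have q1: "integral {-1..u} ?f \<le> (1 - e^2)^k * (u - -1)"
    by (rule int_le_const[OF _ intg]) (use assms in \<open>auto intro!: bnd\<close>)
  have q2: "integral {v..1} ?f \<le> (1 - e^2)^k * (1 - v)"
    by (rule int_le_const[OF _ intg]) (use assms in \<open>auto intro!: bnd\<close>)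
  have qq: "(1 - e^2)^k * (u - -1) \<le> (1 - e^2)^k" "(1 - e^2)^k * (1 - v) \<le> (1 - e^2)^k"
  proof -
    have "e \<le> 1" using assms by linarith
    then have "0 \<le> 1 - e^2" using assms by (simp add: abs_square_le_1)
    then have "0 \<le> (1 - e^2)^k" by simp
    then show "(1 - e^2)^k * (u - -1) \<le> (1 - e^2)^k" "(1 - e^2)^k * (1 - v) \<le> (1 - e^2)^k"
      using assms by (auto intro!: mult_left_le)
  qed
  show "integral {u..v} ?f \<le> WW k" using c1 c2 p1 p2 by linarith
  show "integral {u..v} ?f \<ge> WW k - 2 * (1 - e^2)^k" using c1 c2 q1 q2 qq by linarith
qed

lemma approx_id:
  fixes T T' \<psi> :: "real \<Rightarrow> real" and a b t0 \<kappa> :: real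
  assumes ab: "a < t0" "t0 < b"
    and Tc: "continuous_on {a..b} T"
    and Tb: "\<And>t. t \<in> {a..b} \<Longrightarrow> T t ^ 2 \<le> 1"
    and Tmono: "\<And>x y. a \<le> x \<Longrightarrow> x \<le> y \<Longrightarrow> y \<le> b \<Longrightarrow> T x \<le> T y"
    and T0: "T t0 = 0"
    and Td: "\<And>t. t \<in> {a<..<b} \<Longrightarrow> (T has_real_derivative T' t) (at t)"
    and T'c: "isCont T' t0" and T'pos: "T' t0 > 0"
    and psic: "continuous_on {a..b} \<psi>" and psinn: "\<And>t. t \<in> {a..b} \<Longrightarrow> \<psi> t \<ge> 0"
    and psi0: "\<psi> t0 = \<kappa> * T' t0" and kpos: "\<kappa> > 0"
  shows "(\<lambda>k. integral {a..b} (\<lambda>t. (1 - T t ^ 2)^k * \<psi> t) / WW k) \<longlonglongrightarrow> \<kappa>"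
proof (rule LIMSEQ_I)
  fix r :: real assume r: "r > 0"
  define \<epsilon> where "\<epsilon> = min (r/2) (\<kappa>/2)"
  have ep: "\<epsilon> > 0" "\<epsilon> < \<kappa>" "2 * \<epsilon> \<le> r" using r kpos by (auto simp: \<epsilon>_def)
  have psict: "isCont \<psi> t0"
    using continuous_on_interior[OF psic, of t0] ab by (simp add: interior_atLeastAtMost_real)
  have ev1: "eventually (\<lambda>t. (\<kappa> + \<epsilon>) * T' t - \<psi> t > 0) (at t0)"
  proof (rule order_tendstoD(1))
    show "((\<lambda>t. (\<kappa> + \<epsilon>) * T' t - \<psi> t) \<longlongrightarrow> (\<kappa> + \<epsilon>) * T' t0 - \<psi> t0) (at t0)"
      using T'c psict by (intro tendsto_intros) (auto simp: isCont_def)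
    show "0 < (\<kappa> + \<epsilon>) * T' t0 - \<psi> t0" using psi0 ep T'pos by (simp add: algebra_simps)
  qed
  have ev2: "eventually (\<lambda>t. \<psi> t - (\<kappa> - \<epsilon>) * T' t > 0) (at t0)"
  proof (rule order_tendstoD(1))
    show "((\<lambda>t. \<psi> t - (\<kappa> - \<epsilon>) * T' t) \<longlongrightarrow> \<psi> t0 - (\<kappa> - \<epsilon>) * T' t0) (at t0)"
      using T'c psict by (intro tendsto_intros) (auto simp: isCont_def)
    show "0 < \<psi> t0 - (\<kappa> - \<epsilon>) * T' t0" using psi0 ep T'pos by (simp add: algebra_simps)
  qed
  have ev3: "eventually (\<lambda>t. T' t > 0) (at t0)"
    using order_tendstoD(1)[OF T'c[unfolded isCont_def] T'pos] .
  from eventually_conj[OF ev1 eventually_conj[OF ev2 ev3]]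
  obtain d where d: "d > 0" and dP: "\<And>x. x \<noteq> t0 \<Longrightarrow> dist x t0 < d \<Longrightarrow>
     (\<kappa> + \<epsilon>) * T' x - \<psi> x > 0 \<and> \<psi> x - (\<kappa> - \<epsilon>) * T' x > 0 \<and> T' x > 0"
    unfolding eventually_at by auto
  define \<delta> where "\<delta> = min (d/2) (min ((t0 - a)/2) ((b - t0)/2))"
  have dl0: "\<delta> \<le> (t0 - a)/2" "\<delta> \<le> (b - t0)/2" "\<delta> \<le> d/2" unfolding \<delta>_def by linarith+
  have dl: "\<delta> > 0" "\<delta> < d" "a < t0 - \<delta>" "t0 + \<delta> < b" using d ab dl0 by (auto simp: \<delta>_def)
  define l where "l = t0 - \<delta>"
  define u where "u = t0 + \<delta>"
  have lu: "a < l" "l < t0" "t0 < u" "u < b" using dl by (auto simp: l_def u_def)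
  have P: "(\<kappa> + \<epsilon>) * T' x \<ge> \<psi> x \<and> \<psi> x \<ge> (\<kappa> - \<epsilon>) * T' x \<and> T' x > 0" if "x \<in> {l..u}" for x
  proof (cases "x = t0")
    case True then show ?thesis using psi0 ep T'pos by (simp add: algebra_simps)
  next
    case False
    have "dist x t0 < d" using that dl by (auto simp: l_def u_def dist_real_def)
    then show ?thesis using dP[OF False] by auto
  qed
  have Tder: "DERIV T x :> T' x" if "x \<in> {l..u}" for x using Td[of x] that lu by auto
  have Tl: "T l < 0"
  proof -
    have "T l < T t0"
    proof (rule DERIV_pos_imp_increasing[OF lu(2)])
      fix x assume "l \<le> x" "x \<le> t0"
      then have x: "x \<in> {l..u}" using lu by auto
      show "\<exists>y. DERIV T x :> y \<and> y > 0" using Tder[OF x] P[OF x] by blast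
    qed
    then show ?thesis using T0 by simp
  qed
  have Tu: "T u > 0"
  proof -
    have "T t0 < T u"
    proof (rule DERIV_pos_imp_increasing[OF lu(3)])
      fix x assume "t0 \<le> x" "x \<le> u"
      then have x: "x \<in> {l..u}" using lu by auto
      show "\<exists>y. DERIV T x :> y \<and> y > 0" using Tder[OF x] P[OF x] by blast
    qed
    then show ?thesis using T0 by simp
  qed
  define \<eta> where "\<eta> = min (- T l) (T u)"
  have eta: "\<eta> > 0" "T l \<le> - \<eta>" "\<eta> \<le> T u" using Tl Tu by (auto simp: \<eta>_def)
  have Tabs: "\<bar>T t\<bar> \<le> 1" if "t \<in> {a..b}" for t using Tb[OF that] by (simp add: abs_square_le_1)
  have Tl1: "-1 \<le> T l" "T u \<le> 1" using Tabs[of l] Tabs[of u] lu by auto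
  define q where "q = 1 - \<eta>^2"
  have q: "0 \<le> q" "q < 1"
  proof -
    have "\<eta> \<le> 1" using eta Tl1 by linarith
    then show "0 \<le> q" using eta by (simp add: q_def abs_square_le_1)
    show "q < 1" using eta by (simp add: q_def)
  qed
  define \<Psi> where "\<Psi> = integral {a..b} \<psi>"
  have psi_int: "\<psi> integrable_on {c..e}" if "a \<le> c" "e \<le> b" for c e
    by (rule integrable_continuous_interval) (rule continuous_on_subset[OF psic], use that in auto)
  have Psi_nn: "integral {c..e} \<psi> \<ge> 0" if "a \<le> c" "e \<le> b" for c e
    by (rule int_nonneg[OF psi_int[OF that]]) (use that psinn in auto)
  have Psi_split: "integral {a..l} \<psi> + integral {u..b} \<psi> \<le> \<Psi>"
  proof -
    have "integral {a..l} \<psi> + integral {l..b} \<psi> = \<Psi>" unfolding \<Psi>_def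
      by (rule Henstock_Kurzweil_Integration.integral_combine[where a=a and c=l and b=b]) (use lu psi_int in auto)
    moreover have "integral {l..u} \<psi> + integral {u..b} \<psi> = integral {l..b} \<psi>"
      by (rule Henstock_Kurzweil_Integration.integral_combine[where a=l and c=u and b=b]) (use lu psi_int in auto)
    moreover have "integral {l..u} \<psi> \<ge> 0" using Psi_nn[of l u] lu by auto
    ultimately show ?thesis by linarith
  qed
  have Psi_nn0: "\<Psi> \<ge> 0" unfolding \<Psi>_def using Psi_nn[of a b] by simp
  have bounds: "integral {a..b} (\<lambda>t. (1 - T t ^ 2)^k * \<psi> t) \<le> (\<kappa> + \<epsilon>) * WW k + q^k * \<Psi>
      \<and> integral {a..b} (\<lambda>t. (1 - T t ^ 2)^k * \<psi> t) \<ge> (\<kappa> - \<epsilon>) * (WW k - 2 * q^k)" for k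
  proof -
    let ?g = "\<lambda>t. (1 - T t ^ 2)^k * \<psi> t"
    have gint: "?g integrable_on {c..e}" if "a \<le> c" "e \<le> b" for c e
      by (rule integrable_continuous_interval)
         (intro continuous_intros continuous_on_subset[OF psic] continuous_on_subset[OF Tc], use that in auto)
    have gnn: "?g t \<ge> 0" if "t \<in> {a..b}" for t using Tb[OF that] psinn[OF that] by simp
    have split: "integral {a..l} ?g + integral {l..u} ?g + integral {u..b} ?g = integral {a..b} ?g"
    proof -
      have "integral {a..l} ?g + integral {l..b} ?g = integral {a..b} ?g"
        by (rule Henstock_Kurzweil_Integration.integral_combine[where a=a and c=l and b=b]) (use lu gint in auto)
      moreover have "integral {l..u} ?g + integral {u..b} ?g = integral {l..b} ?g"
        by (rule Henstock_Kurzweil_Integration.integral_combine[where a=l and c=u and b=b]) (use lu gint in auto)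
      ultimately show ?thesis by linarith
    qed
    have out_bnd: "(1 - T t ^ 2)^k \<le> q^k" if "t \<in> {a..l} \<union> {u..b}" for t
    proof -
      have tab: "t \<in> {a..b}" using that lu by auto
      have "\<eta> \<le> \<bar>T t\<bar>"
      proof (cases "t \<le> l")
        case True
        then have "T t \<le> T l" using Tmono[of t l] that lu by auto
        then show ?thesis using eta by linarith
      next
        case False
        then have "u \<le> t" using that by auto
        then have "T u \<le> T t" using Tmono[of u t] that lu by auto
        then show ?thesis using eta by linarith
      qed
      then have "\<eta>^2 \<le> (T t)^2" using eta by (metis abs_le_square_iff abs_of_pos)
      then show ?thesis unfolding q_def using Tb[OF tab] by (intro power_mono) auto
    qed
    have o1: "integral {a..l} ?g \<le> q^k * integral {a..l} \<psi>"
    proof -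
      have "integral {a..l} ?g \<le> integral {a..l} (\<lambda>t. q^k * \<psi> t)"
      proof (rule integral_le)
        show "?g integrable_on {a..l}" using gint lu by auto
        show "(\<lambda>t. q^k * \<psi> t) integrable_on {a..l}"
          using lu by (auto intro!: integrable_continuous_interval continuous_intros continuous_on_subset[OF psic])
      qed (use lu in \<open>auto intro!: mult_right_mono out_bnd psinn\<close>)
      then show ?thesis by simp
    qed
    have o2: "integral {u..b} ?g \<le> q^k * integral {u..b} \<psi>"
    proof -
      have "integral {u..b} ?g \<le> integral {u..b} (\<lambda>t. q^k * \<psi> t)"
      proof (rule integral_le)
        show "?g integrable_on {u..b}" using gint lu by auto
        show "(\<lambda>t. q^k * \<psi> t) integrable_on {u..b}"
          using lu by (auto intro!: integrable_continuous_interval continuous_intros continuous_on_subset[OF psic])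
      qed (use lu in \<open>auto intro!: mult_right_mono out_bnd psinn\<close>)
      then show ?thesis by simp
    qed
    have o1n: "integral {a..l} ?g \<ge> 0" by (rule int_nonneg[OF gint]) (use lu gnn in auto)
    have o2n: "integral {u..b} ?g \<ge> 0" by (rule int_nonneg[OF gint]) (use lu gnn in auto)
    let ?f = "\<lambda>x::real. (1 - x^2)^k"
    have sub: "((\<lambda>t. T' t *\<^sub>R ?f (T t)) has_integral integral {T l..T u} ?f) {l..u}"
    proof (rule has_integral_substitution[where c="-1" and d=1])
      show "l \<le> u" "T l \<le> T u" using lu Tl Tu by auto
      show "T ` {l..u} \<subseteq> {-1..1}" using Tabs lu by (auto simp: abs_le_iff)
      show "continuous_on {-1..1} ?f" by (intro continuous_intros)
      show "\<And>x. x \<in> {l..u} \<Longrightarrow> (T has_real_derivative T' x) (at x within {l..u})"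
        using Tder by (auto intro: has_field_derivative_at_within)
    qed
    define J where "J = integral {T l..T u} ?f"
    have J: "J \<le> WW k" "J \<ge> WW k - 2 * q^k"
      using WW_window[of "T l" \<eta> "T u" k] Tl1 eta by (auto simp: J_def q_def)
    have Jint: "((\<lambda>t. T' t * (1 - T t ^ 2)^k) has_integral J) {l..u}" using sub by (simp add: J_def)
    have wu: "integral {l..u} ?g \<le> (\<kappa> + \<epsilon>) * J"
    proof -
      have "integral {l..u} ?g \<le> integral {l..u} (\<lambda>t. (\<kappa> + \<epsilon>) * (T' t * (1 - T t ^ 2)^k))"
      proof (rule integral_le[OF gint])
        show "(\<lambda>t. (\<kappa> + \<epsilon>) * (T' t * (1 - T t ^ 2)^k)) integrable_on {l..u}"
          using has_integral_mult_right[OF Jint] by (auto simp: has_integral_integrable)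
        fix t assume t: "t \<in> {l..u}"
        then have "(1 - T t ^ 2)^k \<ge> 0" using Tb[of t] lu by auto
        then show "?g t \<le> (\<kappa> + \<epsilon>) * (T' t * (1 - T t ^ 2)^k)"
          using P[OF t] mult_left_mono[of "\<psi> t" "(\<kappa> + \<epsilon>) * T' t" "(1 - T t ^ 2)^k"]
          by (simp add: algebra_simps)
      qed (use lu in auto)
      also have "\<dots> = (\<kappa> + \<epsilon>) * J" using integral_unique[OF Jint] by simp
      finally show ?thesis .
    qed
    have wl: "integral {l..u} ?g \<ge> (\<kappa> - \<epsilon>) * J"
    proof -
      have "integral {l..u} (\<lambda>t. (\<kappa> - \<epsilon>) * (T' t * (1 - T t ^ 2)^k)) \<le> integral {l..u} ?g"
      proof (rule integral_le[OF _ gint])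
        show "(\<lambda>t. (\<kappa> - \<epsilon>) * (T' t * (1 - T t ^ 2)^k)) integrable_on {l..u}"
          using has_integral_mult_right[OF Jint] by (auto simp: has_integral_integrable)
        fix t assume t: "t \<in> {l..u}"
        then have "(1 - T t ^ 2)^k \<ge> 0" using Tb[of t] lu by auto
        then show "(\<kappa> - \<epsilon>) * (T' t * (1 - T t ^ 2)^k) \<le> ?g t"
          using P[OF t] mult_left_mono[of "(\<kappa> - \<epsilon>) * T' t" "\<psi> t" "(1 - T t ^ 2)^k"]
          by (simp add: algebra_simps)
      qed (use lu in auto)
      also have "integral {l..u} (\<lambda>t. (\<kappa> - \<epsilon>) * (T' t * (1 - T t ^ 2)^k)) = (\<kappa> - \<epsilon>) * J"
        using integral_unique[OF Jint] by simp
      finally show ?thesis .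
    qed
    have qk: "q^k \<ge> 0" using q by simp
    have up: "integral {a..b} ?g \<le> (\<kappa> + \<epsilon>) * WW k + q^k * \<Psi>"
    proof -
      have "(\<kappa> + \<epsilon>) * J \<le> (\<kappa> + \<epsilon>) * WW k" using J ep kpos by (intro mult_left_mono) auto
      moreover have "q^k * integral {a..l} \<psi> + q^k * integral {u..b} \<psi> \<le> q^k * \<Psi>"
        using Psi_split qk by (simp add: distrib_left[symmetric] mult_left_mono)
      ultimately show ?thesis using split o1 o2 wu by linarith
    qed
    have lo: "integral {a..b} ?g \<ge> (\<kappa> - \<epsilon>) * (WW k - 2 * q^k)"
    proof -
      have "(\<kappa> - \<epsilon>) * (WW k - 2 * q^k) \<le> (\<kappa> - \<epsilon>) * J" using J ep by (intro mult_left_mono) auto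
      then show ?thesis using split o1n o2n wl by linarith
    qed
    show ?thesis using up lo by blast
  qed
  define c where "c = \<epsilon> / (\<Psi> + 2 * \<kappa> + 1)"
  have c: "c > 0" using ep Psi_nn0 kpos by (auto simp: c_def)
  have "eventually (\<lambda>k. q^k / WW k < c) sequentially"
    using order_tendstoD(2)[OF pow_over_WW[OF q] c] .
  then obtain N where N: "\<And>k. k \<ge> N \<Longrightarrow> q^k / WW k < c" unfolding eventually_sequentially by auto
  show "\<exists>no. \<forall>n\<ge>no. norm (integral {a..b} (\<lambda>t. (1 - T t ^ 2)^n * \<psi> t) / WW n - \<kappa>) < r"
  proof (intro exI allI impI)
    fix n assume n: "n \<ge> N"
    let ?A = "integral {a..b} (\<lambda>t. (1 - T t ^ 2)^n * \<psi> t)"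
    have W: "WW n > 0" using WW_pos by simp
    have qn: "q^n / WW n < c" "q^n / WW n \<ge> 0" using N[OF n] W q by auto
    have ub: "?A \<le> (\<kappa> + \<epsilon>) * WW n + q^n * \<Psi>" and lb: "(\<kappa> - \<epsilon>) * (WW n - 2 * q^n) \<le> ?A"
      using bounds[of n] by blast+
    have "?A / WW n \<le> ((\<kappa> + \<epsilon>) * WW n + q^n * \<Psi>) / WW n" using ub W by (intro divide_right_mono) auto
    also have "\<dots> = (\<kappa> + \<epsilon>) + \<Psi> * (q^n / WW n)" using W by (simp add: field_simps)
    finally have u1: "?A / WW n \<le> (\<kappa> + \<epsilon>) + \<Psi> * (q^n / WW n)" .
    have "(\<kappa> - \<epsilon>) * (WW n - 2 * q^n) / WW n \<le> ?A / WW n" using lb W by (intro divide_right_mono) auto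
    moreover have "(\<kappa> - \<epsilon>) * (WW n - 2 * q^n) / WW n = (\<kappa> - \<epsilon>) - 2 * (\<kappa> - \<epsilon>) * (q^n / WW n)"
      using W by (simp add: field_simps)
    ultimately have l1: "?A / WW n \<ge> (\<kappa> - \<epsilon>) - 2 * (\<kappa> - \<epsilon>) * (q^n / WW n)" by simp
    have "\<Psi> * (q^n / WW n) \<le> \<Psi> * c" using qn Psi_nn0 by (intro mult_left_mono) auto
    also have "\<Psi> * c < \<epsilon>"
    proof -
      have "\<Psi> < \<Psi> + 2 * \<kappa> + 1" using kpos by simp
      then have "\<Psi> / (\<Psi> + 2 * \<kappa> + 1) < 1" using Psi_nn0 kpos by simp
      then have "\<epsilon> * (\<Psi> / (\<Psi> + 2 * \<kappa> + 1)) < \<epsilon> * 1" using ep by (intro mult_strict_left_mono) auto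
      then show ?thesis by (simp add: c_def mult.commute)
    qed
    finally have u2: "\<Psi> * (q^n / WW n) < \<epsilon>" .
    have "2 * (\<kappa> - \<epsilon>) * (q^n / WW n) \<le> 2 * (\<kappa> - \<epsilon>) * c" using qn ep by (intro mult_left_mono) auto
    also have "2 * (\<kappa> - \<epsilon>) * c < \<epsilon>"
    proof -
      have "2 * (\<kappa> - \<epsilon>) < \<Psi> + 2 * \<kappa> + 1" using kpos ep Psi_nn0 by simp
      then have "2 * (\<kappa> - \<epsilon>) / (\<Psi> + 2 * \<kappa> + 1) < 1" using Psi_nn0 kpos by simp
      then have "\<epsilon> * (2 * (\<kappa> - \<epsilon>) / (\<Psi> + 2 * \<kappa> + 1)) < \<epsilon> * 1" using ep by (intro mult_strict_left_mono) auto
      then show ?thesis by (simp add: c_def mult.commute mult.left_commute)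
    qed
    finally have l2: "2 * (\<kappa> - \<epsilon>) * (q^n / WW n) < \<epsilon>" .
    show "norm (?A / WW n - \<kappa>) < r" using u1 u2 l1 l2 ep by (simp add: abs_less_iff)
  qed
qed


lemma alg3: fixes S C D z s us :: real
  assumes "s * s = 1 - z" "us * (1 + s) = 1" "C*C = 1 - S*S" "D = 1 - z*S*S"
  shows "D - ((1 + s) * (S*S - us))^2 = (1+s)^2 * (S*C)^2"
  using assms by algebra

locale zsetup =
  fixes z :: real
  assumes z1: "z < 1"
begin

definition s where "s = sqrt (1 - z)"
definition us where "us = 1 / (1 + s)"
definition TT where "TT t = (1 + s) * ((sin t)^2 - us) / sqrt (DD z t)"
definition TT' where "TT' t = ((1 + s) * (2 * sin t * cos t) * sqrt (DD z t)
     - (1 + s) * ((sin t)^2 - us) * (- z * sin t * cos t / sqrt (DD z t))) / (sqrt (DD z t) * sqrt (DD z t))"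
definition psi where "psi t = 1 / sqrt (DD z t)"
definition t0 where "t0 = arcsin (sqrt us)"

lemma s_pos: "s > 0" using z1 by (simp add: s_def)
lemma s_sq: "s^2 = 1 - z" using z1 by (simp add: s_def)
lemma us_pos: "us > 0" "us < 1" using s_pos by (auto simp: us_def)
lemma us_s: "us * (1 + s) = 1" using s_pos by (simp add: us_def)

lemma Q_pos: "sqrt (DD z t) > 0" using DD_pos[OF z1] by simp
lemma Q_sq: "sqrt (DD z t) * sqrt (DD z t) = DD z t" using DD_pos[OF z1, of t] by simp

lemma TT_deriv: "(TT has_real_derivative TT' t) (at t within S)"
proof -
  have d1: "((\<lambda>t. (1 + s) * ((sin t)^2 - us)) has_real_derivative (1 + s) * (2 * sin t * cos t)) (at t within S)"
    by (auto intro!: derivative_eq_intros simp: power2_eq_square)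
  show ?thesis unfolding TT_def[abs_def] TT'_def
    by (rule DERIV_divide[OF d1 sqrt_deriv_DD[OF z1]]) (use Q_pos[of t] in simp)
qed

lemma TT_cont: "continuous_on S TT"
  unfolding TT_def[abs_def] by (intro continuous_intros cont_DD) (auto simp: DD_ne[OF z1] DD_ge[OF z1])

lemma TT'_cont: "continuous_on S TT'"
  unfolding TT'_def[abs_def] by (intro continuous_intros cont_DD) (auto simp: DD_ne[OF z1] DD_ge[OF z1])

lemma psi_cont: "continuous_on S psi"
  unfolding psi_def[abs_def] by (intro continuous_intros cont_DD) (auto simp: DD_ne[OF z1] DD_ge[OF z1])

lemma one_minus_TT: "1 - TT t ^ 2 = (1 + s)^2 * ((sin t * cos t)^2 / DD z t)"
proof -
  have c: "cos t * cos t = 1 - sin t * sin t" using sin_cos_squared_add3[of t] by linarith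
  have ss: "s * s = 1 - z" using s_sq by (simp add: power2_eq_square)
  have hd: "DD z t = 1 - z * sin t * sin t" by (simp add: DD_def power2_eq_square)
  have a: "DD z t - ((1 + s) * (sin t * sin t - us))^2 = (1+s)^2 * (sin t * cos t)^2"
    by (rule alg3[OF ss us_s c hd])
  have "1 - TT t ^ 2 = (DD z t - ((1 + s) * ((sin t)^2 - us))^2) / DD z t"
    unfolding TT_def using Q_pos[of t] DD_pos[OF z1, of t]
    by (simp add: power_divide field_simps)
  also have "\<dots> = (1 + s)^2 * ((sin t * cos t)^2 / DD z t)" using a by (simp add: power2_eq_square)
  finally show ?thesis .
qed

lemma TT_sq_le: "TT t ^ 2 \<le> 1"
proof -
  have "(1 + s)^2 * ((sin t * cos t)^2 / DD z t) \<ge> 0" using DD_pos[OF z1, of t] by simp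
  then show ?thesis using one_minus_TT[of t] by linarith
qed

lemma fG_eq: "fG z k t = (1 / (1 + s)^2)^k * ((1 - TT t ^ 2)^k * psi t)"
proof -
  have "fG z k t = ((sin t * cos t)^2 / DD z t)^k * psi t"
    unfolding fG_def psi_def by (simp add: power_mult power_divide)
  also have "(sin t * cos t)^2 / DD z t = (1 / (1 + s)^2) * (1 - TT t ^ 2)"
    unfolding one_minus_TT using s_pos by (simp add: field_simps)
  finally show ?thesis by (simp add: power_divide)
qed

lemma TT'_nonneg: assumes "t \<in> {0..pi/2}" shows "TT' t \<ge> 0"
proof -
  have sc: "sin t \<ge> 0" "cos t \<ge> 0" using assms by (auto intro: sin_ge_zero cos_ge_zero)
  have "(sin t)^2 \<le> 1" by (simp add: abs_square_le_1)
  have key: "2 * DD z t + z * ((sin t)^2 - us) > 0"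
  proof (cases "z \<le> 0")
    case True
    have "z * (sin t)^2 \<le> 0" by (rule mult_nonpos_nonneg) (use True in auto)
    moreover have "z * us \<le> 0" using True us_pos by (simp add: mult_nonpos_nonneg)
    ultimately show ?thesis unfolding DD_def by (simp add: algebra_simps)
  next
    case False
    have "(sin t)^2 + us \<le> 2" using \<open>(sin t)^2 \<le> 1\<close> us_pos by simp
    then have "z * ((sin t)^2 + us) \<le> z * 2" using False by (intro mult_left_mono) auto
    then show ?thesis unfolding DD_def using z1 by (simp add: algebra_simps)
  qed
  have "TT' t = (1 + s) * (sin t * cos t) * (2 * DD z t + z * ((sin t)^2 - us)) / (sqrt (DD z t) * DD z t)"
    unfolding TT'_def using Q_pos[of t] Q_sq[of t]
    by (simp add: field_simps)
  also have "\<dots> \<ge> 0" using key sc s_pos Q_pos[of t] DD_pos[OF z1, of t]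
    by (intro divide_nonneg_pos mult_nonneg_nonneg) auto
  finally show ?thesis .
qed

lemma TT_mono: assumes "0 \<le> x" "x \<le> y" "y \<le> pi/2" shows "TT x \<le> TT y"
proof (rule DERIV_nonneg_imp_increasing_open[OF assms(2)])
  fix w assume "x < w" "w < y"
  then show "\<exists>d. DERIV TT w :> d \<and> d \<ge> 0" using TT_deriv TT'_nonneg[of w] assms by fastforce
qed (rule TT_cont)

lemma t0_props: "sin t0 = sqrt us" "cos t0 = sqrt (1 - us)" "0 < t0" "t0 < pi/2"
proof -
  have b0: "0 \<le> sqrt us" "sqrt us < 1" using us_pos by auto
  have b: "- 1 \<le> sqrt us" "sqrt us \<le> 1" "-1 < sqrt us" "sqrt us < 1" using b0 by linarith+
  show "sin t0 = sqrt us" unfolding t0_def using b by simp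
  show "cos t0 = sqrt (1 - us)" unfolding t0_def using cos_arcsin[OF b(1,2)] us_pos by simp
  show "t0 < pi/2" unfolding t0_def using arcsin_lt_bounded[OF b(3,4)] by simp
  have "arcsin 0 < arcsin (sqrt us)" using arcsin_less_mono[of 0 "sqrt us"] b us_pos by simp
  then show "0 < t0" unfolding t0_def by simp
qed

lemma DD_t0: "DD z t0 = s"
proof -
  have "DD z t0 = 1 - z * us" unfolding DD_def using t0_props(1) us_pos by simp
  moreover have "z * us = 1 - s"
  proof -
    have zeq: "z = (1 - s) * (1 + s)" using s_sq by (simp add: power2_eq_square algebra_simps)
    have "z * us = (1 - s) * ((1 + s) * us)" by (subst zeq) (simp only: mult.assoc)
    then show ?thesis using us_s by (simp add: mult.commute)
  qed
  ultimately show ?thesis by simp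
qed

lemma TT_t0: "TT t0 = 0" unfolding TT_def using t0_props(1) us_pos by simp

lemma TT'_t0: "TT' t0 = 2"
proof -
  have sc: "sin t0 * cos t0 = sqrt s / (1 + s)"
  proof -
    have "sin t0 * cos t0 = sqrt (us * (1 - us))" using t0_props by (simp add: real_sqrt_mult)
    also have "us * (1 - us) = s / (1 + s)^2" using s_pos by (simp add: us_def field_simps power2_eq_square)
    also have "sqrt (s / (1 + s)^2) = sqrt s / (1 + s)" using s_pos by (simp add: real_sqrt_divide)
    finally show ?thesis .
  qed
  have "TT' t0 = (1 + s) * (2 * (sin t0 * cos t0)) / sqrt (DD z t0)"
    unfolding TT'_def using t0_props(1) us_pos Q_pos[of t0] Q_sq[of t0] by (simp add: field_simps)
  also have "\<dots> = 2"
  proof -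
    have q: "sqrt s > 0" "1 + s > 0" using s_pos by auto
    show ?thesis unfolding sc DD_t0 using q by simp
  qed
  finally show ?thesis .
qed

definition kappa where "kappa = 1 / (2 * sqrt s)"

lemma psi_t0: "psi t0 = kappa * TT' t0"
  unfolding psi_def kappa_def TT'_t0 DD_t0 by simp

definition AA where "AA k = integral {0..pi/2} (\<lambda>t. (1 - TT t ^ 2)^k * psi t)"

lemma AA_lim: "(\<lambda>k. AA k / WW k) \<longlonglongrightarrow> kappa"
  unfolding AA_def
proof (rule approx_id[where T' = TT'])
  show "0 < t0" "t0 < pi/2" using t0_props by auto
  show "continuous_on {0..pi/2} TT" by (rule TT_cont)
  show "\<And>t. TT t ^ 2 \<le> 1" by (rule TT_sq_le)
  show "\<And>x y. 0 \<le> x \<Longrightarrow> x \<le> y \<Longrightarrow> y \<le> pi/2 \<Longrightarrow> TT x \<le> TT y" by (rule TT_mono)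
  show "TT t0 = 0" by (rule TT_t0)
  show "\<And>t. (TT has_real_derivative TT' t) (at t)" by (rule TT_deriv)
  show "isCont TT' t0" using TT'_cont[of UNIV] by (simp add: continuous_on_eq_continuous_at)
  show "TT' t0 > 0" using TT'_t0 by simp
  show "continuous_on {0..pi/2} psi" by (rule psi_cont)
  show "\<And>t. psi t \<ge> 0" unfolding psi_def using DD_ge[OF z1] by simp
  show "psi t0 = kappa * TT' t0" by (rule psi_t0)
  show "kappa > 0" unfolding kappa_def using s_pos by simp
qed

lemma Gs_AA: "Gs z k = z^(2*k) * ((1 / (1 + s)^2)^k * AA k)"
  unfolding Gs_def AA_def fG_eq by simp

end


lemma rec_lim0:
  fixes e f :: "nat \<Rightarrow> real" and lam :: real
  assumes l: "0 \<le> lam" "lam < 1" and f: "f \<longlonglongrightarrow> 0"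
    and rec: "\<And>n. e (Suc n) = lam * e n + f (Suc n)"
  shows "e \<longlonglongrightarrow> 0"
proof (rule LIMSEQ_I)
  fix r :: real assume r: "r > 0"
  have "r * (1 - lam) / 2 > 0" using r l by simp
  then obtain N where N: "\<And>n. n \<ge> N \<Longrightarrow> norm (f n) < r * (1 - lam) / 2"
    using LIMSEQ_D[OF f] by (metis diff_zero)
  define g where "g n = max (\<bar>e n\<bar> - r/2) 0" for n
  have gstep: "g (Suc n) \<le> lam * g n" if "n \<ge> N" for n
  proof -
    have "\<bar>e (Suc n)\<bar> \<le> lam * \<bar>e n\<bar> + \<bar>f (Suc n)\<bar>" using rec[of n] l
      by (simp add: abs_mult) (metis abs_triangle_ineq abs_mult abs_of_nonneg)
    moreover have "\<bar>f (Suc n)\<bar> < r * (1 - lam) / 2" using N[of "Suc n"] that by simp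
    ultimately have "\<bar>e (Suc n)\<bar> - r/2 < lam * (\<bar>e n\<bar> - r/2)" by (simp add: algebra_simps)
    also have "\<dots> \<le> lam * g n" using l by (intro mult_left_mono) (auto simp: g_def)
    finally have "\<bar>e (Suc n)\<bar> - r/2 < lam * g n" .
    moreover have "lam * g n \<ge> 0" using l by (simp add: g_def)
    ultimately show ?thesis by (simp add: g_def)
  qed
  have gm: "g (N + m) \<le> lam^m * g N" for m
  proof (induction m)
    case 0 then show ?case by simp
  next
    case (Suc m)
    have "g (N + Suc m) \<le> lam * g (N + m)" using gstep[of "N+m"] by simp
    also have "\<dots> \<le> lam * (lam^m * g N)" using Suc l by (intro mult_left_mono) auto
    finally show ?case by simp
  qed
  have hl: "(\<lambda>m. lam^m * g N) \<longlonglongrightarrow> 0 * g N" using l by (intro tendsto_mult tendsto_const LIMSEQ_power_zero) auto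
  obtain M where M0: "\<And>m. m \<ge> M \<Longrightarrow> norm (lam^m * g N - 0 * g N) < r/2"
    using LIMSEQ_D[OF hl, of "r/2"] r by auto
  have M: "lam^m * g N < r/2" if "m \<ge> M" for m using M0[OF that] by simp
  show "\<exists>no. \<forall>n\<ge>no. norm (e n - 0) < r"
  proof (intro exI allI impI)
    fix n assume n: "n \<ge> N + M"
    define m where "m = n - N"
    have m: "n = N + m" "m \<ge> M" using n by (auto simp: m_def)
    have "g n < r/2" using gm[of m] M[OF m(2)] m(1) by simp
    moreover have "\<bar>e n\<bar> - r/2 \<le> g n" by (simp add: g_def)
    ultimately show "norm (e n - 0) < r" by simp
  qed
qed

lemma sum_geom_asym:
  fixes x :: "nat \<Rightarrow> real" and c D :: real
  assumes c: "c > 1" and lim: "(\<lambda>j. x j / c^j) \<longlonglongrightarrow> D"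
  shows "(\<lambda>n. (\<Sum>j\<le>n. x j) / c^(n+1)) \<longlonglongrightarrow> D / (c - 1)"
proof -
  define L where "L = D / (c - 1)"
  define e where "e n = (\<Sum>j\<le>n. x j) / c^(n+1) - L" for n
  define f where "f n = (x n / c^n - D) / c" for n
  have f0: "f \<longlonglongrightarrow> 0"
  proof -
    have "(\<lambda>n. (x n / c^n - D) / c) \<longlonglongrightarrow> (D - D) / c" by (intro tendsto_intros lim) (use c in auto)
    then show ?thesis by (simp add: f_def[abs_def])
  qed
  have rec: "e (Suc n) = (1/c) * e n + f (Suc n)" for n
  proof -
    have cp: "c \<noteq> 0" "c - 1 \<noteq> 0" using c by auto
    have "e (Suc n) = ((\<Sum>j\<le>n. x j) + x (Suc n)) / c^(n+2) - L" by (simp add: e_def)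
    also have "\<dots> = (1/c) * ((\<Sum>j\<le>n. x j) / c^(n+1)) + (x (Suc n) / c^(Suc n)) / c - L"
      using cp by (simp add: field_simps)
    also have "\<dots> = (1/c) * e n + f (Suc n)" unfolding e_def f_def L_def using cp by (simp add: field_simps)
    finally show ?thesis .
  qed
  have "e \<longlonglongrightarrow> 0" by (rule rec_lim0[OF _ _ f0 rec]) (use c in auto)
  then have "(\<lambda>n. e n + L) \<longlonglongrightarrow> 0 + L" by (intro tendsto_intros)
  then show ?thesis by (simp add: e_def L_def)
qed


theorem theorem7p2:
  fixes z :: real
  assumes "z < 1" and "z \<noteq> 0"
  defines "a \<equiv> (\<lambda>n::nat. if n = 0 then 2 - z else 4 * real n * (2 - z))"
      and "b \<equiv> (\<lambda>n::nat. - ((2 * real n + 1)^2 * z^2))"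
  shows "(\<lambda>n. cf_p a b n / cf_q a b n) \<longlonglongrightarrow> 2 * ellE z / ellK z \<and>
         (\<lambda>n. 2 * ellE z / ellK z - cf_p a b n / cf_q a b n) \<sim>[sequentially]
           (\<lambda>n. - (2 * pi / (ellK z)^2) / (((1 + sqrt (1 - z))^2 / z) ^ (2 * n + 2)))"
proof -
  interpret Z: zsetup z using assms(1) by unfold_locales
  have Gpos: "\<And>k. Gs z k > 0" using Gs_pos assms(1,2) by blast
  have Kpos: "ellK z > 0" using Gpos[of 0] Gs0 by simp
  interpret C: cfsetup z "ellK z" "ellE z" "Gs z"
  proof
    show "ellK z > 0" by (rule Kpos)
    show "Gs z 0 = ellK z" by (rule Gs0)
    show "Gs z 1 = (2 - z) * ellK z - 2 * ellE z" by (rule Gs1[OF assms(1)])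
    show "\<And>k. k \<ge> 1 \<Longrightarrow> (2 * real k + 1) * Gs z (k+1) = 4 * real k * (2 - z) * Gs z k - (2 * real k - 1) * z^2 * Gs z (k - 1)"
      by (rule Gs_rec[OF assms(1)])
    show "\<And>k. Gs z k > 0" by (rule Gpos)
  qed
  have ab: "C.a = a" "C.b = b" by (simp_all add: C.a_def C.b_def a_def b_def)
  define K where "K = ellK z"
  define E where "E = ellE z"
  define S where "S n = (\<Sum>j\<le>n. C.dterm j)" for n
  have qpos: "cf_q a b n > 0" for n using C.main_identity(1)[OF assms(2)] ab by simp
  have err: "2 * E / K - cf_p a b n / cf_q a b n = - 1 / (K * S n)" for n
    using C.main_identity(2)[OF assms(2)] ab by (simp add: K_def E_def S_def)
  define \<sigma> where "\<sigma> = (1 + Z.s)^2"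
  define \<rho> where "\<rho> = (\<sigma> / z)^2"
  have sp: "Z.s > 0" by (rule Z.s_pos)
  have sig: "\<sigma> > 0" using sp by (simp add: \<sigma>_def)
  have zs: "z = (1 - Z.s) * (1 + Z.s)" using Z.s_sq by (simp add: power2_eq_square algebra_simps)
  have z2: "z^2 = ((1 - Z.s) * (1 + Z.s))^2" using zs by (rule arg_cong[where f="\<lambda>x. x^2"])
  have gen: "\<And>x::real. ((1 + x)^2)^2 - ((1 - x) * (1 + x))^2 = 4 * x * (1 + x)^2" by algebra
  have sig_z: "\<sigma>^2 - z^2 = 4 * Z.s * \<sigma>" unfolding \<sigma>_def z2 by (rule gen)
  have rho1: "\<rho> - 1 = 4 * Z.s * \<sigma> / z^2" using sig_z assms(2) by (simp add: \<rho>_def power_divide field_simps)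
  have rho_gt: "\<rho> > 1" using rho1 sp sig assms(2) by (smt (verit) divide_pos_pos mult_pos_pos zero_less_power2)
  have AApos: "Z.AA k > 0" for k
  proof -
    have "Gs z k > 0" by (rule Gpos)
    then have g: "(z^(2*k) * (1 / (1 + Z.s)^2)^k) * Z.AA k > 0" unfolding Z.Gs_AA by (simp add: mult.assoc)
    have p: "z^(2*k) * (1 / (1 + Z.s)^2)^k > 0" using sp assms(2) by (simp add: power_mult)
    show ?thesis by (rule zero_less_mult_pos[OF g p])
  qed
  have dterm_eq: "C.dterm j = \<rho>^j * (K * \<sigma> / z^2) / ((2 * real j + 1) * (Z.AA j * Z.AA (j+1)))" for j
  proof -
    have e1: "Gs z j * Gs z (j+1) = z^(4*j+2) / \<sigma>^(2*j+1) * (Z.AA j * Z.AA (j+1))"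
      unfolding Z.Gs_AA \<sigma>_def using sp
      by (simp add: power_add power_mult power_divide field_simps) (simp add: algebra_simps power2_eq_square flip: power_add power_mult)
    have e2: "\<rho>^j = \<sigma>^(2*j) / z^(2*j)" by (simp add: \<rho>_def power_divide power_mult)
    have e3: "z^(4*j+2) = z^(2*j) * z^(2*j) * z^2" by (simp add: power_add[symmetric])
    have e4: "\<sigma>^(2*j+1) = \<sigma>^(2*j) * \<sigma>" by simp
    have d0: "C.dterm j = K * z^(2*j) / ((2 * real j + 1) * (Gs z j * Gs z (j+1)))"
      unfolding C.dterm_def K_def by (simp add: mult.assoc)
    have nz: "z^(2*j) \<noteq> 0" "\<sigma>^(2*j) \<noteq> 0" "Z.AA j \<noteq> 0" "Z.AA (j+1) \<noteq> 0" "z \<noteq> 0" "\<sigma> \<noteq> 0"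
      using assms(2) sig AApos[of j] AApos[of "j+1"] by auto
    have gen: "\<And>X Y P m zz ss KK :: real. X \<noteq> 0 \<Longrightarrow> zz \<noteq> 0 \<Longrightarrow> m \<noteq> 0 \<Longrightarrow> P \<noteq> 0 \<Longrightarrow> Y \<noteq> 0 \<Longrightarrow> ss \<noteq> 0 \<Longrightarrow>
       KK * X / (m * (X * X * zz^2 / (Y * ss) * P)) = Y / X * (KK * ss / zz^2) / (m * P)"
      by (simp add: field_simps)
    have m: "2 * real j + 1 \<noteq> 0" by simp
    show ?thesis unfolding d0 e1 e2 e3 e4 using gen[OF nz(1) nz(5) m _ nz(2) nz(6)] nz(3,4) by simp
  qed
  have kap2: "Z.kappa * Z.kappa = 1 / (4 * Z.s)" unfolding Z.kappa_def using sp by (simp add: field_simps)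
  have lim1: "(\<lambda>j. (2 * real j + 1) * (Z.AA j * Z.AA (j+1))) \<longlonglongrightarrow> 2 * pi * (Z.kappa * Z.kappa)"
  proof -
    have A1: "(\<lambda>j. Z.AA (j+1) / WW (j+1)) \<longlonglongrightarrow> Z.kappa" using LIMSEQ_ignore_initial_segment[OF Z.AA_lim, of 1] by simp
    have "(\<lambda>j. ((2 * real j + 1) * WW j * WW (j+1)) * (Z.AA j / WW j) * (Z.AA (j+1) / WW (j+1))) \<longlonglongrightarrow> 2 * pi * Z.kappa * Z.kappa"
      by (intro tendsto_mult WW_prod_lim Z.AA_lim A1)
    moreover have "((2 * real j + 1) * WW j * WW (j+1)) * (Z.AA j / WW j) * (Z.AA (j+1) / WW (j+1)) = (2 * real j + 1) * (Z.AA j * Z.AA (j+1))" for j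
      using WW_pos[of j] WW_pos[of "j+1"] by (simp add: field_simps)
    ultimately show ?thesis by (simp add: mult.assoc)
  qed
  define Dc where "Dc = (K * \<sigma> / z^2) / (2 * pi * (Z.kappa * Z.kappa))"
  have lim2: "(\<lambda>j. C.dterm j / \<rho>^j) \<longlonglongrightarrow> Dc"
  proof -
    have "(\<lambda>j. (K * \<sigma> / z^2) / ((2 * real j + 1) * (Z.AA j * Z.AA (j+1)))) \<longlonglongrightarrow> Dc"
      unfolding Dc_def by (intro tendsto_divide tendsto_const lim1) (use sp kap2 in auto)
    moreover have "C.dterm j / \<rho>^j = (K * \<sigma> / z^2) / ((2 * real j + 1) * (Z.AA j * Z.AA (j+1)))" for j
      unfolding dterm_eq using rho_gt by simp
    ultimately show ?thesis by simp
  qed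
  have lim3: "(\<lambda>n. S n / \<rho>^(n+1)) \<longlonglongrightarrow> Dc / (\<rho> - 1)"
    unfolding S_def by (rule sum_geom_asym[OF rho_gt lim2])
  have Dc_val: "Dc / (\<rho> - 1) = K / (2 * pi)"
    unfolding Dc_def rho1 kap2 using sp sig assms(2) by (simp add: field_simps)
  have Kp: "K > 0" using Kpos by (simp add: K_def)
  define pred where "pred n = - (2 * pi / K^2) / (((1 + sqrt (1 - z))^2 / z) ^ (2 * n + 2))" for n
  have pred_eq: "pred n = - (2 * pi / K^2) / \<rho>^(n+1)" for n
  proof -
    have "((1 + sqrt (1 - z))^2 / z) ^ (2 * n + 2) = \<rho>^(n+1)"
    proof -
      have nn: "2 * n + 2 = 2 * (n + 1)" by simp
      show ?thesis unfolding \<rho>_def \<sigma>_def Z.s_def by (simp only: nn power_mult)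
    qed
    then show ?thesis by (simp add: pred_def)
  qed
  have Spos: "S n > 0" for n unfolding S_def using C.dterm_pos[OF assms(2)] by (intro sum_pos) auto
  have ratio: "(\<lambda>n. (2 * E / K - cf_p a b n / cf_q a b n) / pred n) \<longlonglongrightarrow> 1"
  proof -
    have "(\<lambda>n. (K / (2 * pi)) / (S n / \<rho>^(n+1))) \<longlonglongrightarrow> (K / (2 * pi)) / (K / (2 * pi))"
    proof (rule tendsto_divide[OF tendsto_const])
      show "(\<lambda>n. S n / \<rho>^(n+1)) \<longlonglongrightarrow> K / (2 * pi)" using lim3 Dc_val by simp
      show "K / (2 * pi) \<noteq> 0" using Kp by simp
    qed
    moreover have "(2 * E / K - cf_p a b n / cf_q a b n) / pred n = (K / (2 * pi)) / (S n / \<rho>^(n+1))" for n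
      unfolding err pred_eq using Kp Spos[of n] rho_gt by (simp add: field_simps power2_eq_square)
    ultimately show ?thesis using Kp by simp
  qed
  have pred0: "pred \<longlonglongrightarrow> 0"
  proof -
    have "(\<lambda>n. (1/\<rho>)^(n+1)) \<longlonglongrightarrow> 0"
      using LIMSEQ_ignore_initial_segment[OF LIMSEQ_power_zero[of "1/\<rho>"], of 1] rho_gt by simp
    then have "(\<lambda>n. - (2 * pi / K^2) * (1/\<rho>)^(n+1)) \<longlonglongrightarrow> - (2 * pi / K^2) * 0" by (intro tendsto_intros)
    moreover have "pred = (\<lambda>n. - (2 * pi / K^2) * (1/\<rho>)^(n+1))"
      by (rule ext) (simp add: pred_eq power_one_over)
    ultimately show ?thesis by simp
  qed
  have e0: "(\<lambda>n. 2 * E / K - cf_p a b n / cf_q a b n) \<longlonglongrightarrow> 0"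
  proof -
    have pne: "pred n \<noteq> 0" for n using pred_eq[of n] Kp rho_gt by simp
    have "(\<lambda>n. ((2 * E / K - cf_p a b n / cf_q a b n) / pred n) * pred n) \<longlonglongrightarrow> 1 * 0"
      by (intro tendsto_mult ratio pred0)
    then show ?thesis using pne by simp
  qed
  have conv: "(\<lambda>n. cf_p a b n / cf_q a b n) \<longlonglongrightarrow> 2 * E / K"
  proof -
    have "(\<lambda>n. 2 * E / K - (2 * E / K - cf_p a b n / cf_q a b n)) \<longlonglongrightarrow> 2 * E / K - 0"
      by (intro tendsto_intros e0)
    then show ?thesis by simp
  qed
  have asym: "(\<lambda>n. 2 * E / K - cf_p a b n / cf_q a b n) \<sim>[sequentially] pred"
    by (rule asymp_equivI') (use ratio in simp)
  show ?thesis using conv asym unfolding K_def E_def pred_def[abs_def] by simp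
qed

end
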